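(* For all integers $n\ge 2$, $$(n+1)\,b_n=(n-1)\left(2b_{n-1}+3b_{n-2}\right).$$
   Context: Let $X(\theta)=1+2\cos\theta$ and, for $k\ge 0$, $\chi_k(\theta)=1+2\sum_{j=1}^{k}\cos(j\theta)$ (the character of the $(k+1)$-dimensional irreducible representation of the Lie algebra $A_1$). For $n\ge 0$ the integers $b_n^{(k)}$, $0\le k\le n$, are the unique coefficients with $X(\theta)^n=\sum_{k=0}^{n}b_n^{(k)}\chi_k(\theta)$ for all real $\theta$. Write $b_n=b_n^{(0)}$. *)

theory Defs
  imports Complex_Main
begin

definition X :: "real \<Rightarrow> real" where
  "X \<theta> = 1 + 2 * cos \<theta>"

definition chi :: "nat \<Rightarrow> real \<Rightarrow> real" where
  "chi k \<theta> = 1 + 2 * (\<Sum>j=1..k. cos (real j * \<theta>))"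

text \<open>The coefficients b_n^(k), 0 <= k <= n: the unique integers with
  X(theta)^n = sum_{k=0}^n b_n^(k) chi_k(theta) for all real theta.
  Coefficients outside 0..n are normalised to 0 for uniqueness.\<close>
definition bcoef :: "nat \<Rightarrow> nat \<Rightarrow> int" where
  "bcoef n = (THE c. (\<forall>k>n. c k = 0) \<and>
     (\<forall>\<theta>::real. X \<theta> ^ n = (\<Sum>k=0..n. of_int (c k) * chi k \<theta>)))"

definition b :: "nat \<Rightarrow> int" where
  "b n = bcoef n 0"

end

theory Submission imports Defs begin

fun t :: "nat \<Rightarrow> int \<Rightarrow> int" where
  "t 0 m = (if m = 0 then 1 else 0)"
| "t (Suc n) m = t n (m-1) + t n m + t n (m+1)"

lemma t_zero: "\<bar>m\<bar> > int n \<Longrightarrow> t n m = 0"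
  by (induction n arbitrary: m) auto

lemma t_sym: "t n (-m) = t n m"
proof (induction n arbitrary: m)
  case (Suc n)
  have "t n (-m-1) = t n (m+1)" using Suc[of "m+1"] by simp
  moreover have "t n (-m+1) = t n (m-1)" using Suc[of "m-1"] by simp
  ultimately show ?case using Suc[of m] by simp
qed auto

lemma t_L: "(m-1-int n) * t n (m-1) + m * t n m + (m+1+int n) * t n (m+1) = 0"
proof (induction n arbitrary: m)
  case 0 then show ?case by auto
next
  case (Suc n)
  have a: "(m-1-1-int n) * t n (m-1-1) + (m-1) * t n (m-1) + (m-1+1+int n) * t n (m-1+1) = 0" by (rule Suc)
  have b: "(m-1-int n) * t n (m-1) + m * t n m + (m+1+int n) * t n (m+1) = 0" by (rule Suc)
  have c: "(m+1-1-int n) * t n (m+1-1) + (m+1) * t n (m+1) + (m+1+1+int n) * t n (m+1+1) = 0" by (rule Suc)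
  show ?case using a b c by (simp add: algebra_simps)
qed

lemma shift: "(\<Sum>m\<in>{p..q::int}. G (m+1)) = (\<Sum>m\<in>{p+1..q+1}. G m)"
  by (rule sum.reindex_bij_witness[of _ "\<lambda>m. m-1" "\<lambda>m. m+1"]) auto

lemma cos_indep: "\<forall>d. (\<forall>\<theta>. (\<Sum>k\<le>N. d k * cos (real k * \<theta>)) = 0) \<longrightarrow> (\<forall>k\<le>N. d k = 0)"
proof (induction N)
  case 0 then show ?case by auto
next
  case (Suc N)
  show ?case
  proof (rule allI, rule impI)
    fix d :: "nat \<Rightarrow> real"
    assume H: "\<forall>\<theta>. (\<Sum>k\<le>Suc N. d k * cos (real k * \<theta>)) = 0"
    define h where "h = pi / real (Suc N)"
    have key: "(\<Sum>k\<le>N. (2 * d k * (cos (real k * h) + 1)) * cos (real k * \<theta>)) = 0" for \<theta>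
    proof -
      have "0 = (\<Sum>k\<le>Suc N. d k * cos (real k * (\<theta>+h))) + (\<Sum>k\<le>Suc N. d k * cos (real k * (\<theta>-h)))
            + 2 * (\<Sum>k\<le>Suc N. d k * cos (real k * \<theta>))" using H by simp
      also have "\<dots> = (\<Sum>k\<le>Suc N. (2 * d k * (cos (real k * h) + 1)) * cos (real k * \<theta>))"
        by (simp add: sum.distrib sum_distrib_left distrib_left cos_add cos_diff algebra_simps flip: sum.distrib)
      also have "\<dots> = (\<Sum>k\<le>N. (2 * d k * (cos (real k * h) + 1)) * cos (real k * \<theta>))"
        by (simp add: h_def)
      finally show ?thesis by simp
    qed
    have "\<forall>k\<le>N. 2 * d k * (cos (real k * h) + 1) = 0"
      using Suc.IH[rule_format, of "\<lambda>k. 2 * d k * (cos (real k * h) + 1)"] key by blast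
    moreover have "cos (real k * h) + 1 > 0" if "k \<le> N" for k
    proof -
      have "pi * real k < pi * (1 + real N)" using that by (intro mult_strict_left_mono) auto
      then have "0 \<le> real k * h" "real k * h < pi" using that by (auto simp: h_def field_simps)
      then have "cos (real k * h) > cos pi"
        by (intro cos_monotone_0_pi) auto
      then show ?thesis by simp
    qed
    ultimately have low: "\<forall>k\<le>N. d k = 0" by fastforce
    have "d (Suc N) = 0" using H[rule_format, of 0] low by simp
    then show "\<forall>k\<le>Suc N. d k = 0" using low le_Suc_eq by blast
  qed
qed

lemma shift1:
  assumes "G p = 0" "G (q+1) = 0" "p \<le> q"
  shows "(\<Sum>m\<in>{p..q::int}. G (m+1)) = (\<Sum>m\<in>{p..q}. G m)"
proof -
  have e1: "{p..q+1} = insert p {p+1..q+1}" and e2: "{p..q+1} = insert (q+1) {p..q}"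
    using assms(3) by auto
  have "(\<Sum>m\<in>{p..q+1}. G m) = (\<Sum>m\<in>{p+1..q+1}. G m)"
    unfolding e1 using assms by (subst sum.insert) auto
  moreover have "(\<Sum>m\<in>{p..q+1}. G m) = (\<Sum>m\<in>{p..q}. G m)"
    unfolding e2 using assms by (subst sum.insert) auto
  ultimately show ?thesis using shift[of G p q] by simp
qed

lemma X_int: "int n \<le> N \<Longrightarrow> X \<theta> ^ n = (\<Sum>m\<in>{-N..N}. of_int (t n m) * cos (of_int m * \<theta>))"
proof (induction n arbitrary: N)
  case 0
  have "{-N..N} = insert 0 ({-N..N} - {0})" using 0 by auto
  then have "(\<Sum>m\<in>{-N..N}. of_int (t 0 m) * cos (of_int m * \<theta>)) = 1"
    by (subst \<open>{-N..N} = _\<close>, subst sum.insert) auto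
  then show ?case by simp
next
  case (Suc n)
  define F where "F m = of_int (t n m) * cos (of_int m * \<theta>)" for m
  define G where "G m = of_int (t n (m-1)) * cos (of_int m * \<theta>)" for m
  define H where "H m = of_int (t n (m+1)) * cos (of_int m * \<theta>)" for m
  have IH: "X \<theta> ^ n = (\<Sum>m\<in>{-N..N}. F m)" using Suc by (simp add: F_def)
  have c: "2 * cos \<theta> * cos (of_int m * \<theta>) = cos (of_int (m+1) * \<theta>) + cos (of_int (m-1) * \<theta>)" for m :: int
    by (simp add: cos_add cos_diff algebra_simps)
  have pw: "X \<theta> * F m = F m + G (m+1) + H (m-1)" for m
  proof -
    have "X \<theta> * F m = F m + of_int (t n m) * (2 * cos \<theta> * cos (of_int m * \<theta>))"
      by (simp add: X_def F_def algebra_simps)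
    also have "\<dots> = F m + G (m+1) + H (m-1)" unfolding c by (simp add: G_def H_def algebra_simps)
    finally show ?thesis .
  qed
  have "X \<theta> ^ Suc n = (\<Sum>m\<in>{-N..N}. F m + G (m+1) + H (m-1))"
    unfolding power_Suc IH sum_distrib_left pw ..
  also have "\<dots> = (\<Sum>m\<in>{-N..N}. F m) + (\<Sum>m\<in>{-N..N}. G (m+1)) + (\<Sum>m\<in>{-N..N}. H (m-1))"
    by (simp add: sum.distrib)
  also have "(\<Sum>m\<in>{-N..N}. G (m+1)) = (\<Sum>m\<in>{-N..N}. G m)"
    using Suc.prems by (intro shift1) (auto simp: G_def t_zero)
  also have "(\<Sum>m\<in>{-N..N}. H (m-1)) = (\<Sum>m\<in>{-N..N}. H m)"
    using Suc.prems shift1[of "\<lambda>m. H (m-1)" "-N" N] by (auto simp: H_def t_zero)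
  finally show ?case
    by (simp add: F_def G_def H_def algebra_simps flip: sum.distrib)
qed

lemma int_to_nat: "(\<Sum>m\<in>{-int N..int N}. f m) = f 0 + (\<Sum>k=1..N. f (int k) + f (- int k))"
proof (induction N)
  case 0 then show ?case by simp
next
  case (Suc N)
  have e: "{-int (Suc N)..int (Suc N)} = insert (int N + 1) (insert (- (int N + 1)) {-int N..int N})" by auto
  show ?case unfolding e using Suc by (simp add: ac_simps)
qed

lemma X_cos: "X \<theta> ^ n = of_int (t n 0) + 2 * (\<Sum>k=1..n. of_int (t n (int k)) * cos (real k * \<theta>))"
  using X_int[of n "int n" \<theta>] unfolding int_to_nat
  by (simp add: t_sym sum_distrib_left)

lemma swap: fixes n :: nat and e a :: "nat \<Rightarrow> real" shows "(\<Sum>k=0..n. e k * (\<Sum>j=1..k. a j)) = (\<Sum>j=1..n. a j * (\<Sum>k=j..n. e k))"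
proof (induction n)
  case (Suc n)
  have "(\<Sum>j=1..Suc n. a j * (\<Sum>k=j..Suc n. e k)) = (\<Sum>j=1..n. a j * ((\<Sum>k=j..n. e k) + e (Suc n))) + a (Suc n) * e (Suc n)"
    by (simp add: sum.cl_ivl_Suc)
  also have "\<dots> = (\<Sum>j=1..n. a j * (\<Sum>k=j..n. e k)) + e (Suc n) * (\<Sum>j=1..Suc n. a j)"
  proof -
    have "(\<Sum>j=1..n. a j * ((\<Sum>k=j..n. e k) + e (Suc n))) = (\<Sum>j=1..n. a j * (\<Sum>k=j..n. e k)) + e (Suc n) * (\<Sum>j=1..n. a j)"
      by (simp add: distrib_left sum.distrib sum_distrib_left mult.commute)
    then show ?thesis by (simp add: distrib_left)
  qed
  finally show ?case using Suc by simp
qed simp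

lemma chi_exp: fixes e :: "nat \<Rightarrow> real" shows "(\<Sum>k=0..n. e k * chi k \<theta>) = (\<Sum>k=0..n. e k) + 2 * (\<Sum>j=1..n. (\<Sum>k=j..n. e k) * cos (real j * \<theta>))"
proof -
  have "(\<Sum>k=0..n. e k * chi k \<theta>) = (\<Sum>k=0..n. e k) + 2 * (\<Sum>k=0..n. e k * (\<Sum>j=1..k. cos (real j * \<theta>)))"
    by (simp add: chi_def algebra_simps sum.distrib sum_distrib_left)
  also note swap
  finally show ?thesis by (simp add: mult.commute)
qed

lemma chi_indep:
  fixes e :: "nat \<Rightarrow> real"
  assumes H: "\<forall>\<theta>. (\<Sum>k=0..n. e k * chi k \<theta>) = 0"
  shows "\<forall>k\<le>n. e k = 0"
proof -
  define g where "g j = (if j = 0 then (\<Sum>k=0..n. e k) else 2 * (\<Sum>k=j..n. e k))" for j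
  have "(\<Sum>j\<le>n. g j * cos (real j * \<theta>)) = 0" for \<theta>
  proof -
    have e: "{..n} = insert 0 {1..n}" by auto
    have "(\<Sum>j\<le>n. g j * cos (real j * \<theta>)) = (\<Sum>k=0..n. e k) + (\<Sum>j=1..n. 2 * (\<Sum>k=j..n. e k) * cos (real j * \<theta>))"
      unfolding e by (subst sum.insert) (auto simp: g_def)
    also have "\<dots> = (\<Sum>k=0..n. e k * chi k \<theta>)"
      by (simp add: chi_exp sum_distrib_left mult.assoc flip: sum_distrib_left)
    finally show ?thesis using H by simp
  qed
  then have G: "\<forall>j\<le>n. g j = 0" using cos_indep[rule_format, of g n] by blast
  have tail: "(\<Sum>k=j..n. e k) = 0" if "j \<ge> 1" for j
  proof (cases "j \<le> n")
    case True then show ?thesis using G[rule_format, of j] that by (simp add: g_def)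
  qed simp
  show ?thesis
  proof (intro allI impI)
    fix k assume "k \<le> n"
    then have "(\<Sum>i=k..n. e i) = e k + (\<Sum>i=Suc k..n. e i)" by (simp add: sum.atLeast_Suc_atMost)
    moreover have "(\<Sum>i=k..n. e i) = 0"
      using tail[of k] G[rule_format, of 0] by (cases "k = 0") (auto simp: g_def)
    ultimately show "e k = 0" using tail[of "Suc k"] by simp
  qed
qed

definition cc :: "nat \<Rightarrow> nat \<Rightarrow> int" where
  "cc n k = t n (int k) - t n (int k + 1)"

lemma cc_prop: "(\<forall>k>n. cc n k = 0) \<and> (\<forall>\<theta>::real. X \<theta> ^ n = (\<Sum>k=0..n. of_int (cc n k) * chi k \<theta>))"
proof
  show "\<forall>k>n. cc n k = 0" by (auto simp: cc_def t_zero)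
  show "\<forall>\<theta>::real. X \<theta> ^ n = (\<Sum>k=0..n. of_int (cc n k) * chi k \<theta>)"
  proof
    fix \<theta> :: real
    have tel: "(\<Sum>k=j..n. real_of_int (cc n k)) = of_int (t n (int j))" if "j \<le> Suc n" for j
    proof -
      have "(\<Sum>k=j..n. real_of_int (cc n k)) = - (\<Sum>k=j..n. (\<lambda>i. real_of_int (t n (int i))) (Suc k) - (\<lambda>i. real_of_int (t n (int i))) k)"
        by (simp add: cc_def sum_negf[symmetric] algebra_simps)
      also have "\<dots> = of_int (t n (int j))"
        using that by (subst sum_Suc_diff) (auto simp: t_zero)
      finally show ?thesis .
    qed
    have "(\<Sum>k=0..n. of_int (cc n k) * chi k \<theta>) = of_int (t n 0) + 2 * (\<Sum>j=1..n. of_int (t n (int j)) * cos (real j * \<theta>))"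
      unfolding chi_exp using tel by simp
    then show "X \<theta> ^ n = (\<Sum>k=0..n. of_int (cc n k) * chi k \<theta>)" by (simp add: X_cos)
  qed
qed

lemma bcoef_eq: "bcoef n = cc n"
  unfolding bcoef_def
proof (rule the1_equality)
  show "\<exists>!c. (\<forall>k>n. c k = 0) \<and> (\<forall>\<theta>::real. X \<theta> ^ n = (\<Sum>k=0..n. of_int (c k) * chi k \<theta>))"
  proof (rule ex1I[of _ "cc n"])
    show "(\<forall>k>n. cc n k = 0) \<and> (\<forall>\<theta>::real. X \<theta> ^ n = (\<Sum>k=0..n. of_int (cc n k) * chi k \<theta>))"
      by (rule cc_prop)
    fix c assume A: "(\<forall>k>n. c k = 0) \<and> (\<forall>\<theta>::real. X \<theta> ^ n = (\<Sum>k=0..n. of_int (c k) * chi k \<theta>))"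
    have "\<forall>\<theta>. (\<Sum>k=0..n. real_of_int (c k - cc n k) * chi k \<theta>) = 0"
      using A cc_prop[of n] by (simp add: left_diff_distrib sum_subtractf)
    then have "\<forall>k\<le>n. real_of_int (c k - cc n k) = 0" by (rule chi_indep)
    then show "c = cc n" using A cc_prop[of n] by (intro ext) (metis not_le of_int_eq_0_iff right_minus_eq)
  qed
  show "(\<forall>k>n. cc n k = 0) \<and> (\<forall>\<theta>::real. X \<theta> ^ n = (\<Sum>k=0..n. of_int (cc n k) * chi k \<theta>))"
    by (rule cc_prop)
qed

lemma b_eq: "b n = t n 0 - t n 1"
  by (simp add: b_def bcoef_eq cc_def)

theorem mainTheorem10:
  fixes n :: nat
  assumes "n \<ge> 2"
  shows "int (n + 1) * b n = int (n - 1) * (2 * b (n - 1) + 3 * b (n - 2))"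
proof -
  obtain k where n: "n = Suc (Suc k)" using assms by (metis add_2_eq_Suc le_Suc_ex)
  have s1: "t j (-1) = t j 1" for j using t_sym[of j 1] by simp
  have Bk: "(- int k) * t k 0 + t k 1 + (2+int k) * t k 2 = 0"
    using t_L[of 1 k] s1 by simp
  have Bk1: "(- int (Suc k)) * t (Suc k) 0 + t (Suc k) 1 + (2+int (Suc k)) * t (Suc k) 2 = 0"
    using t_L[of 1 "Suc k"] s1 by simp
  have T1: "t (Suc k) 0 = t k 0 + 2 * t k 1" using s1[of k] by simp
  have U1: "t (Suc k) 1 = t k 0 + t k 1 + t k 2" by simp
  have T2: "t (Suc (Suc k)) 0 = t (Suc k) 0 + 2 * t (Suc k) 1" using s1[of "Suc k"] by (simp only: t.simps) simp
  have U2: "t (Suc (Suc k)) 1 = t (Suc k) 0 + t (Suc k) 1 + t (Suc k) 2" by (simp only: t.simps) simp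
  show ?thesis unfolding n b_eq
    using Bk Bk1 T1 U1 T2 U2 by (simp add: algebra_simps)
qed

end
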